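(* Let $q$ be a prime power and let $\mathcal{C}\subseteq\mathbb{F}_q^N$ be a $(u,v)$-ordered-batch code of dimension $n$ and redundancy $r=N-n$, where $u,v$ are positive integers with $v\ge2$, $uv\le n$, and $q\ge\max\{4u\binom{n}{u},7\}$. For each $u$-subset $I=\{i_1,\dots,i_u\}\subseteq[n]$ fix a family of pairwise disjoint recovering sets $R_{j,l}=R_{j,l}(I)$ ($j\in[u]$, $l\in[v]$) as in the definition of a $(u,v)$-ordered-batch code. Then there exists an $(r-v+2)$-dimensional subspace $V$ of the dual code $\mathcal{C}^{\perp}$ such that for every $u$-subset $I=\{i_1,\dots,i_u\}\subseteq[n]$ and every $j\in[u]$, $V$ contains a vector $\mathbf{v}_j$ with $i_j\in\operatorname{supp}(\mathbf{v}_j)\subseteq\big(\bigcup_{l=2}^{v}R_{j,l}\big)\cup\{i_j\}$.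
   Context: $[m]=\{1,\dots,m\}$. A linear code $\mathcal{C}\subseteq\mathbb{F}^N$ of dimension $n$ is systematic if for every $\mathbf{x}\in\mathbb{F}^n$ there is a unique codeword whose first $n$ coordinates equal $\mathbf{x}$. A set $R\subseteq[N]$ is a recovering set for $i\in[n]$ if there are scalars $\lambda_k$ ($k\in R$) with $\mathbf{c}(i)=\sum_{k\in R}\lambda_k\mathbf{c}(k)$ for all $\mathbf{c}\in\mathcal{C}$. $(u,v)$-ordered-batch code: a systematic linear code $\mathcal{C}\subseteq\mathbb{F}^N$ of dimension $n$ such that for every set $I=\{i_1,\dots,i_u\}\subseteq[n]$ of $u$ distinct indices there exist $uv$ pairwise disjoint sets $R_{j,l}\subseteq[N]$ ($j\in[u]$, $l\in[v]$), each $R_{j,l}$ a recovering set for $i_j$, such that the directed graph $D_I$ with vertex set $I$ and an arc $i_j\to i_k$ (for $j,k\in[u]$, $j=k$ allowed) whenever $i_k\in\bigcup_{l=1}^{v}R_{j,l}$, is acyclic (no directed cycles, no loops). $\mathcal{C}^\perp$ is the dual code (dimension $r$), and $\operatorname{supp}(\mathbf{w})$ is the set of nonzero coordinates of $\mathbf{w}$. *)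

theory Defs
  imports Complex_Main "HOL-Library.Function_Algebras"
begin

text \<open>Vectors of F^N are functions nat => F supported on [N] = {1..N}.\<close>

definition smul :: "'a::field \<Rightarrow> (nat \<Rightarrow> 'a) \<Rightarrow> (nat \<Rightarrow> 'a)" where
  "smul c x = (\<lambda>i. c * x i)"

definition vecs :: "nat \<Rightarrow> (nat \<Rightarrow> 'a::field) set" where
  "vecs N = {x. \<forall>i. i \<notin> {1..N} \<longrightarrow> x i = 0}"

definition is_subspace :: "(nat \<Rightarrow> 'a::field) set \<Rightarrow> bool" where
  "is_subspace V = module.subspace smul V"

definition vdim :: "(nat \<Rightarrow> 'a::field) set \<Rightarrow> nat" where
  "vdim V = vector_space.dim smul V"

definition linear_code :: "nat \<Rightarrow> (nat \<Rightarrow> 'a::field) set \<Rightarrow> bool" where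
  "linear_code N C \<longleftrightarrow> C \<subseteq> vecs N \<and> is_subspace C"

definition systematic :: "nat \<Rightarrow> nat \<Rightarrow> (nat \<Rightarrow> 'a::field) set \<Rightarrow> bool" where
  "systematic N n C \<longleftrightarrow> n \<le> N \<and>
     (\<forall>x \<in> vecs n. \<exists>!c. c \<in> C \<and> (\<forall>i\<in>{1..n}. c i = x i))"

definition supp :: "(nat \<Rightarrow> 'a::zero) \<Rightarrow> nat set" where
  "supp w = {k. w k \<noteq> 0}"

definition recovering_set :: "nat \<Rightarrow> (nat \<Rightarrow> 'a::field) set \<Rightarrow> nat \<Rightarrow> nat set \<Rightarrow> bool" where
  "recovering_set N C i R \<longleftrightarrow> R \<subseteq> {1..N} \<and>
     (\<exists>lam. \<forall>c\<in>C. c i = (\<Sum>k\<in>R. lam k * c k))"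

text \<open>Family of recovering sets for the u-subset I, indexed by the elements i of I
  (i plays the role of i_j) and l in [v]: RI i l = R_{j,l}.\<close>
definition ob_family ::
  "nat \<Rightarrow> (nat \<Rightarrow> 'a::field) set \<Rightarrow> nat \<Rightarrow> nat set \<Rightarrow> (nat \<Rightarrow> nat \<Rightarrow> nat set) \<Rightarrow> bool" where
  "ob_family N C v I RI \<longleftrightarrow>
     (\<forall>i\<in>I. \<forall>l\<in>{1..v}. recovering_set N C i (RI i l)) \<and>
     (\<forall>i\<in>I. \<forall>l\<in>{1..v}. \<forall>i'\<in>I. \<forall>l'\<in>{1..v}. (i, l) \<noteq> (i', l') \<longrightarrow> RI i l \<inter> RI i' l' = {}) \<and>
     acyclic {(a, b). a \<in> I \<and> b \<in> I \<and> b \<in> (\<Union>l\<in>{1..v}. RI a l)}"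

definition ordered_batch_code ::
  "nat \<Rightarrow> nat \<Rightarrow> nat \<Rightarrow> nat \<Rightarrow> (nat \<Rightarrow> 'a::field) set \<Rightarrow> bool" where
  "ordered_batch_code N n u v C \<longleftrightarrow> linear_code N C \<and> systematic N n C \<and> vdim C = n \<and>
     (\<forall>I. I \<subseteq> {1..n} \<and> card I = u \<longrightarrow> (\<exists>RI. ob_family N C v I RI))"

definition dual_code :: "nat \<Rightarrow> (nat \<Rightarrow> 'a::field) set \<Rightarrow> (nat \<Rightarrow> 'a) set" where
  "dual_code N C = {w \<in> vecs N. \<forall>c\<in>C. (\<Sum>k\<in>{1..N}. w k * c k) = 0}"

end

theory Submission
  imports Defs "HOL-Library.FuncSet"
begin

lemma smul_vs: "vector_space (smul :: 'a::field \<Rightarrow> (nat \<Rightarrow> 'a) \<Rightarrow> _)"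
  by unfold_locales (auto simp: smul_def fun_eq_iff algebra_simps)

interpretation vs: vector_space "smul :: 'a::field \<Rightarrow> (nat \<Rightarrow> 'a) \<Rightarrow> _"
  by (rule smul_vs)

lemma sum_fun_apply: "(\<Sum>k\<in>A. f k) (i::nat) = (\<Sum>k\<in>A. f k i)"
  by (induction A rule: infinite_finite_induct) auto

definition uv :: "nat \<Rightarrow> nat \<Rightarrow> 'a::field" where
  "uv k = (\<lambda>i. if i = k then 1 else 0)"

definition dot :: "nat \<Rightarrow> (nat \<Rightarrow> 'a::field) \<Rightarrow> (nat \<Rightarrow> 'a) \<Rightarrow> 'a" where
  "dot N y x = (\<Sum>k\<in>{1..N}. y k * x k)"

lemma vecs_subspace: "vs.subspace (vecs N :: (nat \<Rightarrow> 'a::field) set)"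
  unfolding vs.subspace_def vecs_def by (auto simp: smul_def)

lemma vecs_expand:
  assumes "x \<in> vecs N"
  shows "x = (\<Sum>k\<in>{1..N}. smul (x k) (uv k :: nat \<Rightarrow> 'a::field))"
proof
  fix i
  show "x i = (\<Sum>k\<in>{1..N}. smul (x k) (uv k :: nat \<Rightarrow> 'a)) i"
  proof (cases "i \<in> {1..N}")
    case True
    have "(\<Sum>k\<in>{1..N}. x k * (if i = k then 1 else 0)) = (\<Sum>k\<in>{1..N}. if i = k then x k else 0)"
      by (rule sum.cong) auto
    then show ?thesis using True
      by (simp add: sum_fun_apply smul_def uv_def)
  next
    case False
    then show ?thesis using assms
      by (auto simp add: sum_fun_apply smul_def uv_def vecs_def intro!: sum.neutral)
  qed
qed

lemma vecs_span: "vecs N \<subseteq> vs.span ((uv :: nat \<Rightarrow> nat \<Rightarrow> 'a::field) ` {1..N})"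
proof
  fix x :: "nat \<Rightarrow> 'a" assume x: "x \<in> vecs N"
  have "(\<Sum>k\<in>{1..N}. smul (x k) (uv k :: nat \<Rightarrow> 'a)) \<in> vs.span (uv ` {1..N})"
    by (intro vs.span_sum vs.span_scale vs.span_base) auto
  then show "x \<in> vs.span (uv ` {1..N})" using vecs_expand[OF x] by simp
qed

lemma span_vecs: "S \<subseteq> vecs N \<Longrightarrow> vs.span S \<subseteq> (vecs N :: (nat \<Rightarrow> 'a::field) set)"
  using vs.span_minimal vecs_subspace by blast

lemma indep_finite:
  assumes "B \<subseteq> vecs N" "vs.independent (B :: (nat \<Rightarrow> 'a::field) set)"
  shows "finite B"
  using vs.independent_span_bound[of "(uv :: nat \<Rightarrow> nat \<Rightarrow> 'a) ` {1..N}" B] assms vecs_span by blast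

lemma dim_insert':
  assumes S: "S \<subseteq> (vecs N :: (nat \<Rightarrow> 'a::field) set)" and x: "x \<notin> vs.span S"
  shows "vs.dim (insert x S) = vs.dim S + 1"
proof -
  obtain B where B: "B \<subseteq> vs.span S" "vs.independent B" "vs.span S \<subseteq> vs.span B" "card B = vs.dim (vs.span S)"
    using vs.basis_exists [of "vs.span S"] by blast
  have fB: "finite B" using indep_finite[OF _ B(2)] B(1) span_vecs[OF S] by blast
  have "vs.dim (vs.span (insert x S)) = Suc (vs.dim S)"
  proof (rule vs.dim_unique)
    show "insert x B \<subseteq> vs.span (insert x S)"
      by (meson B(1) insertI1 insert_subset order_trans vs.span_base vs.span_mono subset_insertI)
    show "vs.span (insert x S) \<subseteq> vs.span (insert x B)"
      by (metis \<open>B \<subseteq> vs.span S\<close> \<open>vs.span S \<subseteq> vs.span B\<close> vs.span_breakdown_eq vs.span_subspace subsetI vs.subspace_span)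
    show "vs.independent (insert x B)"
      by (metis B(1-3) vs.independent_insert vs.span_subspace vs.subspace_span x)
    show "card (insert x B) = Suc (vs.dim S)"
      using B x fB by (metis card_insert_disjoint subsetD vs.dim_span vs.span_base)
  qed
  then show ?thesis by simp
qed

lemma dim_mono':
  assumes "S \<subseteq> T" "T \<subseteq> (vecs N :: (nat \<Rightarrow> 'a::field) set)"
  shows "vs.dim S \<le> vs.dim T"
proof -
  obtain B where B: "B \<subseteq> T" "vs.independent B" "T \<subseteq> vs.span B" "card B = vs.dim T"
    using vs.basis_exists [of T] by blast
  have "finite B" using indep_finite[OF _ B(2)] B(1) assms(2) by blast
  then show ?thesis using vs.dim_le_card[of S B] assms B by auto
qed

lemma dim_indep_le:
  assumes "B \<subseteq> T" "T \<subseteq> (vecs N :: (nat \<Rightarrow> 'a::field) set)" "vs.independent B"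
  shows "card B \<le> vs.dim T"
  using dim_mono'[OF assms(1,2)] vs.dim_eq_card_independent[OF assms(3)] by simp

lemma dim_pos_nonzero:
  assumes "0 < vs.dim (T :: (nat \<Rightarrow> 'a::field) set)"
  shows "\<exists>z\<in>T. z \<noteq> 0"
proof (rule ccontr)
  assume "\<not> ?thesis"
  then have "T \<subseteq> vs.span {}" by auto
  then have "vs.dim T \<le> card ({} :: (nat \<Rightarrow> 'a) set)" by (intro vs.dim_le_card) auto
  then show False using assms by simp
qed

lemma dot_add: "dot N y (a + b) = dot N y a + dot N y b"
  by (simp add: dot_def algebra_simps sum.distrib)
lemma dot_diff: "dot N y (a - b) = dot N y a - dot N y b"
  by (simp add: dot_def algebra_simps sum_subtractf)
lemma dot_smul: "dot N y (smul c x) = c * dot N y x"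
  by (simp add: dot_def smul_def sum_distrib_left algebra_simps)
lemma dot_zero[simp]: "dot N y 0 = 0"
  by (simp add: dot_def)

lemma ker_subspace: "vs.subspace {x. dot N y x = (0::'a::field)}"
  unfolding vs.subspace_def by (auto simp: dot_add dot_smul)

lemma dim_drop:
  fixes U :: "(nat \<Rightarrow> 'a::field) set"
  assumes U: "vs.subspace U" "U \<subseteq> vecs N" and s0: "s0 \<in> U" "dot N y s0 \<noteq> 0"
  shows "vs.dim U = vs.dim (U \<inter> {x. dot N y x = 0}) + 1"
proof -
  let ?K = "U \<inter> {x. dot N y x = 0}"
  have sK: "vs.subspace ?K" using U(1) ker_subspace vs.subspace_inter by blast
  have spK: "vs.span ?K = ?K" by (rule vs.span_eq_iff[THEN iffD2, OF sK])
  have "s0 \<notin> vs.span ?K" unfolding spK using s0 by simp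
  then have d: "vs.dim (insert s0 ?K) = vs.dim ?K + 1"
    using dim_insert'[of ?K N s0] U(2) by blast
  have "vs.span (insert s0 ?K) = U"
  proof
    show "vs.span (insert s0 ?K) \<subseteq> U"
      using vs.span_minimal[of "insert s0 ?K" U] U s0 by blast
  next
    show "U \<subseteq> vs.span (insert s0 ?K)"
    proof
      fix u assume u: "u \<in> U"
      define c where "c = dot N y u / dot N y s0"
      have k: "u - smul c s0 \<in> ?K"
        using u s0 U(1) by (auto simp: dot_diff dot_smul c_def vs.subspace_diff vs.subspace_scale)
      have "u = (u - smul c s0) + smul c s0" by simp
      also have "\<dots> \<in> vs.span (insert s0 ?K)"
        using k by (intro vs.span_add vs.span_scale vs.span_base) auto
      finally show "u \<in> vs.span (insert s0 ?K)" .
    qed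
  qed
  then have "vs.dim U = vs.dim (insert s0 ?K)" by (metis vs.dim_span)
  with d show ?thesis by simp
qed

lemma vecs_image:
  "(vecs N :: (nat \<Rightarrow> 'a::field) set) = (\<lambda>f i. if i \<in> {1..N} then f i else 0) ` (PiE {1..N} (\<lambda>_. UNIV))"
proof
  show "(vecs N :: (nat \<Rightarrow> 'a::field) set) \<subseteq> (\<lambda>f i. if i \<in> {1..N} then f i else 0) ` (PiE {1..N} (\<lambda>_. UNIV))"
  proof
    fix x :: "nat \<Rightarrow> 'a" assume x: "x \<in> vecs N"
    have "x = (\<lambda>i. if i \<in> {1..N} then restrict x {1..N} i else 0)"
      using x by (auto simp: vecs_def fun_eq_iff)
    moreover have "restrict x {1..N} \<in> PiE {1..N} (\<lambda>_. UNIV)" by auto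
    ultimately show "x \<in> (\<lambda>f i. if i \<in> {1..N} then f i else 0) ` (PiE {1..N} (\<lambda>_. UNIV))"
      by blast
  qed
qed (auto simp: vecs_def)

lemma vecs_card:
  "finite (vecs N :: (nat \<Rightarrow> 'a::{finite,field}) set)"
  "card (vecs N :: (nat \<Rightarrow> 'a::{finite,field}) set) = card (UNIV :: 'a set) ^ N"
proof -
  let ?e = "\<lambda>f i. if i \<in> {1..N} then f i else (0::'a)"
  have inj: "inj_on ?e (PiE {1..N} (\<lambda>_. UNIV))"
  proof (rule inj_onI)
    fix f g assume f: "f \<in> PiE {1..N} (\<lambda>_. (UNIV::'a set))" and g: "g \<in> PiE {1..N} (\<lambda>_. (UNIV::'a set))"
      and eq: "?e f = ?e g"
    show "f = g"
    proof (rule PiE_ext[OF f g])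
      fix i assume "i \<in> {1..N}" then show "f i = g i" using fun_cong[OF eq, of i] by simp
    qed
  qed
  show "finite (vecs N :: (nat \<Rightarrow> 'a::{finite,field}) set)"
    unfolding vecs_image by (intro finite_imageI finite_PiE) auto
  show "card (vecs N :: (nat \<Rightarrow> 'a::{finite,field}) set) = card (UNIV :: 'a set) ^ N"
    unfolding vecs_image using card_image[OF inj] by (simp add: card_PiE)
qed

lemma bad_card:
  fixes z :: "nat \<Rightarrow> 'a::{finite,field}"
  assumes z: "z \<in> vecs N" "z \<noteq> 0"
  shows "card {y \<in> vecs N. dot N y z = 0} \<le> card (UNIV :: 'a set) ^ (N - 1)"
proof -
  obtain k0 where k0: "z k0 \<noteq> 0" using z(2) by (auto simp: fun_eq_iff)
  have k0N: "k0 \<in> {1..N}" using z(1) k0 by (auto simp: vecs_def)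
  let ?A = "{1..N} - {k0}"
  let ?r = "\<lambda>y. restrict y ?A"
  have inj: "inj_on ?r {y \<in> vecs N. dot N y z = 0}"
  proof (rule inj_onI)
    fix y y' assume y: "y \<in> {y \<in> vecs N. dot N y z = 0}" and y': "y' \<in> {y \<in> vecs N. dot N y z = 0}"
      and eq: "?r y = ?r y'"
    have agree: "\<And>k. k \<in> ?A \<Longrightarrow> y k = y' k" using eq by (metis restrict_apply')
    have s: "\<And>w. dot N w z = w k0 * z k0 + (\<Sum>k\<in>?A. w k * z k)"
      unfolding dot_def using k0N by (simp add: sum.remove)
    have "(\<Sum>k\<in>?A. y k * z k) = (\<Sum>k\<in>?A. y' k * z k)" using agree by simp
    then have "y k0 * z k0 = y' k0 * z k0" using y y' s[of y] s[of y'] by (auto simp: add_eq_0_iff)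
    then have "y k0 = y' k0" using k0 by simp
    then show "y = y'" using agree y y' by (auto simp: vecs_def fun_eq_iff) (metis DiffI atLeastAtMost_iff singletonD)
  qed
  have "card {y \<in> vecs N. dot N y z = 0} \<le> card (PiE ?A (\<lambda>_. (UNIV :: 'a set)))"
    by (rule card_inj_on_le[OF inj]) (auto simp: restrict_PiE_iff image_subset_iff intro: finite_PiE)
  also have "\<dots> = card (UNIV :: 'a set) ^ (N - 1)" using k0N by (simp add: card_PiE)
  finally show ?thesis .
qed

lemma exists_good:
  fixes Z :: "(nat \<Rightarrow> 'a::{finite,field}) set"
  assumes Z: "finite Z" "Z \<subseteq> vecs N" "0 \<notin> Z" "card Z < card (UNIV :: 'a set)"
  shows "\<exists>y\<in>vecs N. \<forall>z\<in>Z. dot N y z \<noteq> 0"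
proof (cases "Z = {}")
  case True
  then show ?thesis using vecs_subspace[of N] by (auto simp: vs.subspace_def)
next
  case False
  then obtain z0 where z0: "z0 \<in> Z" by auto
  then have "z0 \<noteq> 0" using Z by auto
  then obtain k where "z0 k \<noteq> 0" by (auto simp: fun_eq_iff)
  moreover have "z0 \<in> vecs N" using Z(2) z0 by blast
  ultimately have "k \<in> {1..N}" unfolding vecs_def by blast
  then have N1: "N \<ge> 1" by simp
  let ?B = "\<Union>z\<in>Z. {y \<in> vecs N. dot N y z = 0}"
  have "card ?B \<le> (\<Sum>z\<in>Z. card {y \<in> vecs N. dot N y z = 0})"
    using Z(1) by (rule card_UN_le)
  also have "\<dots> \<le> (\<Sum>z\<in>Z. card (UNIV :: 'a set) ^ (N - 1))"
    by (rule sum_mono, rule bad_card) (use Z in auto)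
  also have "\<dots> = card Z * card (UNIV :: 'a set) ^ (N - 1)" by simp
  also have "\<dots> < card (UNIV :: 'a set) * card (UNIV :: 'a set) ^ (N - 1)"
    using Z(4) by (intro mult_strict_right_mono) auto
  also have "\<dots> = card (UNIV :: 'a set) ^ N" using N1 by (metis power_eq_if not_one_le_zero)
  also have "\<dots> = card (vecs N :: (nat \<Rightarrow> 'a) set)" by (simp add: vecs_card)
  finally have "card ?B < card (vecs N :: (nat \<Rightarrow> 'a) set)" .
  moreover have "?B \<subseteq> vecs N" by blast
  ultimately have "\<not> vecs N \<subseteq> ?B"
    by (metis (no_types, lifting) subset_antisym less_irrefl)
  then show ?thesis by blast
qed

lemma dot_comm: "dot N y x = dot N x y"
  by (simp add: dot_def mult.commute)

lemma dot_uv: "k \<in> {1..N} \<Longrightarrow> dot N c (uv k) = c k"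
  by (simp add: dot_def uv_def if_distrib[where f="\<lambda>t. c _ * t"] cong: if_cong)

lemma dot_sum: "finite A \<Longrightarrow> dot N y (\<Sum>i\<in>A. f i) = (\<Sum>i\<in>A. dot N y (f i))"
  by (simp add: dot_def sum_fun_apply sum_distrib_left) (rule sum.swap)

lemma uv_vecs: "k \<in> {1..N} \<Longrightarrow> uv k \<in> vecs N"
  by (auto simp: uv_def vecs_def)

lemma dual_subspace: "vs.subspace (dual_code N C :: (nat \<Rightarrow> 'a::field) set)"
  unfolding vs.subspace_def dual_code_def
proof (intro conjI ballI allI)
  show "0 \<in> {w \<in> vecs N. \<forall>c\<in>C. (\<Sum>k\<in>{1..N}. w k * c k) = (0::'a)}"
    using vecs_subspace[of N] by (auto simp: vs.subspace_def)
next
  fix x y assume "x \<in> {w \<in> vecs N. \<forall>c\<in>C. (\<Sum>k\<in>{1..N}. w k * c k) = (0::'a)}"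
    "y \<in> {w \<in> vecs N. \<forall>c\<in>C. (\<Sum>k\<in>{1..N}. w k * c k) = (0::'a)}"
  then show "x + y \<in> {w \<in> vecs N. \<forall>c\<in>C. (\<Sum>k\<in>{1..N}. w k * c k) = 0}"
    using vecs_subspace[of N] by (auto simp: vs.subspace_def algebra_simps sum.distrib)
next
  fix c :: 'a and x assume "x \<in> {w \<in> vecs N. \<forall>c\<in>C. (\<Sum>k\<in>{1..N}. w k * c k) = (0::'a)}"
  then show "smul c x \<in> {w \<in> vecs N. \<forall>c\<in>C. (\<Sum>k\<in>{1..N}. w k * c k) = 0}"
    using vecs_subspace[of N] by (auto simp: vs.subspace_def smul_def mult.assoc sum_distrib_left[symmetric])
qed

lemma dual_code_dot: "dual_code N C = {w \<in> vecs N. \<forall>c\<in>C. dot N w c = 0}"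
  by (simp add: dual_code_def dot_def)

locale syscode =
  fixes N n :: nat and C :: "(nat \<Rightarrow> 'a::field) set"
  assumes lin: "linear_code N C" and sys: "systematic N n C"
begin

lemma nN: "n \<le> N" using sys by (simp add: systematic_def)
lemma CN: "C \<subseteq> vecs N" using lin by (simp add: linear_code_def)
lemma Csub: "vs.subspace C" using lin by (simp add: linear_code_def is_subspace_def)

definition g :: "nat \<Rightarrow> nat \<Rightarrow> 'a" where
  "g i = (THE c. c \<in> C \<and> (\<forall>j\<in>{1..n}. c j = uv i j))"

lemma g_prop: assumes "i \<in> {1..n}" shows "g i \<in> C" "\<And>j. j \<in> {1..n} \<Longrightarrow> g i j = uv i j"
proof -
  have U: "uv i \<in> vecs n" using assms by (rule uv_vecs)
  have A: "\<forall>x\<in>vecs n. \<exists>!c. c \<in> C \<and> (\<forall>j\<in>{1..n}. c j = x j)" using sys by (simp add: systematic_def)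
  have "\<exists>!c. c \<in> C \<and> (\<forall>j\<in>{1..n}. c j = uv i j)" using bspec[OF A U] .
  then have "g i \<in> C \<and> (\<forall>j\<in>{1..n}. g i j = uv i j)" unfolding g_def by (rule theI')
  then show "g i \<in> C" "\<And>j. j \<in> {1..n} \<Longrightarrow> g i j = uv i j" by auto
qed

lemma C_expand: assumes c: "c \<in> C" shows "c = (\<Sum>i\<in>{1..n}. smul (c i) (g i))"
proof -
  let ?x = "\<lambda>j. if j \<in> {1..n} then c j else 0"
  have X: "?x \<in> vecs n" by (simp add: vecs_def)
  have A: "\<forall>x\<in>vecs n. \<exists>!c. c \<in> C \<and> (\<forall>j\<in>{1..n}. c j = x j)" using sys by (simp add: systematic_def)
  have u: "\<exists>!c'. c' \<in> C \<and> (\<forall>j\<in>{1..n}. c' j = ?x j)" using bspec[OF A X] .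
  have s: "(\<Sum>i\<in>{1..n}. smul (c i) (g i)) \<in> C"
    using Csub g_prop(1) by (intro vs.subspace_sum vs.subspace_scale) auto
  have "(\<Sum>i\<in>{1..n}. smul (c i) (g i)) j = c j" if j: "j \<in> {1..n}" for j
  proof -
    have "(\<Sum>i\<in>{1..n}. smul (c i) (g i)) j = (\<Sum>i\<in>{1..n}. c i * uv i j)"
      by (simp add: sum_fun_apply smul_def g_prop(2)[OF _ j])
    also have "\<dots> = (\<Sum>i\<in>{1..n}. if i = j then c i else 0)"
      by (rule sum.cong) (auto simp: uv_def)
    also have "\<dots> = c j" using j by simp
    finally show ?thesis .
  qed
  then have "\<forall>j\<in>{1..n}. (\<Sum>i\<in>{1..n}. smul (c i) (g i)) j = ?x j" by simp
  moreover have "\<forall>j\<in>{1..n}. c j = ?x j" by simp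
  ultimately show ?thesis using u c s by (metis (no_types, lifting))
qed

definition h :: "nat \<Rightarrow> nat \<Rightarrow> 'a" where
  "h k = uv k - (\<Sum>i\<in>{1..n}. smul (g i k) (uv i))"

lemma h_apply: "h k m = uv k m - (\<Sum>i\<in>{1..n}. g i k * uv i m)"
  by (simp add: h_def sum_fun_apply smul_def)

lemma h_high: "m \<notin> {1..n} \<Longrightarrow> h k m = uv k m"
  by (simp add: h_apply uv_def) (rule sum.neutral, auto)

lemma h_dual: assumes k: "k \<in> {n+1..N}" shows "h k \<in> dual_code N C"
proof -
  have hv: "h k \<in> vecs N"
    unfolding h_def using k nN
    by (intro vs.subspace_diff[OF vecs_subspace] vs.subspace_sum[OF vecs_subspace]
        vs.subspace_scale[OF vecs_subspace] uv_vecs) auto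
  have "dot N (h k) c = 0" if c: "c \<in> C" for c
  proof -
    have "dot N c (h k) = c k - (\<Sum>i\<in>{1..n}. g i k * c i)"
      unfolding h_def using k nN
      by (simp add: dot_diff dot_sum dot_smul dot_uv)
    also have "c k = (\<Sum>i\<in>{1..n}. smul (c i) (g i)) k" using C_expand[OF c] by metis
    also have "\<dots> = (\<Sum>i\<in>{1..n}. g i k * c i)" by (simp add: sum_fun_apply smul_def mult.commute)
    finally show ?thesis by (simp add: dot_comm)
  qed
  then show ?thesis using hv by (simp add: dual_code_dot)
qed

lemma dual_expand: assumes w: "w \<in> dual_code N C"
  shows "w = (\<Sum>k\<in>{n+1..N}. smul (w k) (h k))"
proof
  fix m
  have wv: "w \<in> vecs N" using w by (simp add: dual_code_def)
  have R: "(\<Sum>k\<in>{n+1..N}. smul (w k) (h k)) m = (\<Sum>k\<in>{n+1..N}. w k * h k m)"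
    by (simp add: sum_fun_apply smul_def)
  show "w m = (\<Sum>k\<in>{n+1..N}. smul (w k) (h k)) m"
  proof (cases "m \<in> {1..n}")
    case True
    have hk: "h k m = - g m k" if "k \<in> {n+1..N}" for k
    proof -
      have "h k m = uv k m - (\<Sum>i\<in>{1..n}. if i = m then g i k else 0)"
        unfolding h_apply by (intro arg_cong2[where f="(-)"] refl sum.cong) (auto simp: uv_def)
      then show ?thesis using True that by (simp add: uv_def)
    qed
    have "0 = dot N w (g m)" using w g_prop(1)[OF True] by (simp add: dual_code_dot)
    also have "\<dots> = (\<Sum>j\<in>{1..n}. w j * g m j) + (\<Sum>j\<in>{n+1..N}. w j * g m j)"
    proof -
      have "{1..N} = {1..n} \<union> {n+1..N}" using nN by auto
      then show ?thesis unfolding dot_def by (simp add: sum.union_disjoint)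
    qed
    also have "(\<Sum>j\<in>{1..n}. w j * g m j) = (\<Sum>j\<in>{1..n}. if j = m then w j else 0)"
      by (rule sum.cong) (auto simp: g_prop(2)[OF True] uv_def)
    also have "\<dots> = w m" using True by simp
    finally have "w m = - (\<Sum>j\<in>{n+1..N}. w j * g m j)" by (simp add: eq_neg_iff_add_eq_0 add.commute)
    also have "\<dots> = (\<Sum>k\<in>{n+1..N}. w k * h k m)"
      by (simp add: hk sum_negf)
    finally show ?thesis using R by simp
  next
    case False
    then have "(\<Sum>k\<in>{n+1..N}. w k * h k m) = (\<Sum>k\<in>{n+1..N}. if k = m then w k else 0)"
      by (intro sum.cong) (auto simp: h_high uv_def)
    also have "\<dots> = w m" using False wv by (auto simp: vecs_def)
    finally show ?thesis using R by simp
  qed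
qed

lemma dual_dim: "vs.dim (dual_code N C) = N - n"
proof (rule vs.dim_unique)
  show "h ` {n+1..N} \<subseteq> dual_code N C" using h_dual by auto
  show "dual_code N C \<subseteq> vs.span (h ` {n+1..N})"
  proof
    fix w assume w: "w \<in> dual_code N C"
    have "(\<Sum>k\<in>{n+1..N}. smul (w k) (h k)) \<in> vs.span (h ` {n+1..N})"
      by (intro vs.span_sum vs.span_scale vs.span_base) auto
    then show "w \<in> vs.span (h ` {n+1..N})" using dual_expand[OF w] by simp
  qed
  have hh: "h k m = (if m = k then 1 else 0)" if "m \<in> {n+1..N}" for k m
    using that by (simp add: h_high uv_def)
  have inj: "inj_on h {n+1..N}"
  proof (rule inj_onI)
    fix a b assume a: "a \<in> {n+1..N}" and b: "b \<in> {n+1..N}" and "h a = h b"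
    then have "h a a = h b a" by simp
    then show "a = b" using hh[OF a] by (auto split: if_splits)
  qed
  show "vs.independent (h ` {n+1..N})"
  proof (rule vs.independent_if_scalars_zero)
    show "finite (h ` {n+1..N})" by simp
    fix f x assume s: "(\<Sum>x\<in>h ` {n+1..N}. smul (f x) x) = 0" and x: "x \<in> h ` {n+1..N}"
    then obtain k0 where k0: "k0 \<in> {n+1..N}" "x = h k0" by auto
    have "0 = (\<Sum>x\<in>h ` {n+1..N}. smul (f x) x) k0" using s by simp
    also have "\<dots> = (\<Sum>k\<in>{n+1..N}. f (h k) * h k k0)"
      using sum.reindex[OF inj, of "\<lambda>x. f x * x k0"] by (simp add: sum_fun_apply smul_def)
    also have "\<dots> = (\<Sum>k\<in>{n+1..N}. if k = k0 then f (h k) else 0)"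
      by (rule sum.cong) (auto simp: hh[OF k0(1)])
    also have "\<dots> = f x" using k0 by simp
    finally show "f x = 0" by simp
  qed
  show "card (h ` {n+1..N}) = N - n" using card_image[OF inj] by simp
qed

end

definition suppset :: "nat set \<Rightarrow> (nat \<Rightarrow> 'a::field) set" where
  "suppset A = {x. supp x \<subseteq> A}"

lemma suppset_subspace: "vs.subspace (suppset A :: (nat \<Rightarrow> 'a::field) set)"
proof -
  have "(x + y) \<in> suppset A" if "x \<in> suppset A" "y \<in> suppset A" for x y :: "nat \<Rightarrow> 'a"
    using that unfolding suppset_def supp_def by (simp add: subset_iff) (metis add.right_neutral)
  moreover have "smul c x \<in> suppset A" if "x \<in> suppset A" for x :: "nat \<Rightarrow> 'a" and c
    using that unfolding suppset_def supp_def by (auto simp: smul_def subset_iff)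
  moreover have "0 \<in> (suppset A :: (nat \<Rightarrow> 'a) set)" by (simp add: suppset_def supp_def)
  ultimately show ?thesis unfolding vs.subspace_def by blast
qed

lemma iterate:
  fixes Dual :: "(nat \<Rightarrow> 'a::{finite,field}) set" and P :: "'p set"
  assumes D: "vs.subspace Dual" "Dual \<subseteq> vecs N"
    and P: "finite P" "P \<noteq> {}" "card P < card (UNIV :: 'a set)"
    and QZ: "\<And>p. vs.subspace (Qs p)" "\<And>p. vs.subspace (Zs p)" "\<And>p. Zs p \<subseteq> Qs p"
      "\<And>p x. x \<in> Zs p \<Longrightarrow> x (ip p) = 0"
    and start: "\<And>p. p \<in> P \<Longrightarrow> (\<exists>x\<in>Dual \<inter> Qs p. x (ip p) \<noteq> 0) \<and> K \<le> vs.dim (Dual \<inter> Zs p)"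
  shows "t \<le> K \<Longrightarrow> \<exists>U. vs.subspace U \<and> U \<subseteq> Dual \<and> vs.dim U + t = vs.dim Dual \<and>
     (\<forall>p\<in>P. (\<exists>x\<in>U \<inter> Qs p. x (ip p) \<noteq> 0) \<and> K \<le> vs.dim (U \<inter> Zs p) + t)"
proof (induction t)
  case 0
  then show ?case using D start by (intro exI[of _ Dual]) auto
next
  case (Suc t)
  then obtain U where U: "vs.subspace U" "U \<subseteq> Dual" "vs.dim U + t = vs.dim Dual"
    "\<And>p. p \<in> P \<Longrightarrow> (\<exists>x\<in>U \<inter> Qs p. x (ip p) \<noteq> 0)"
    "\<And>p. p \<in> P \<Longrightarrow> K \<le> vs.dim (U \<inter> Zs p) + t" by auto
  have UN: "U \<subseteq> vecs N" using U(2) D(2) by blast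
  have "\<exists>z\<in>U \<inter> Zs p. z \<noteq> 0" if p: "p \<in> P" for p
    using dim_pos_nonzero[of "U \<inter> Zs p"] U(5)[OF p] Suc.prems by linarith
  then obtain zf where zf: "\<And>p. p \<in> P \<Longrightarrow> zf p \<in> U \<inter> Zs p \<and> zf p \<noteq> 0" by metis
  have "\<exists>y\<in>vecs N. \<forall>z\<in>zf ` P. dot N y z \<noteq> 0"
  proof (rule exists_good)
    show "finite (zf ` P)" using P by simp
    show "zf ` P \<subseteq> vecs N"
    proof (rule image_subsetI)
      fix p assume "p \<in> P" then show "zf p \<in> vecs N" using zf[of p] UN by auto
    qed
    show "0 \<notin> zf ` P"
    proof
      assume "0 \<in> zf ` P" then obtain p where "p \<in> P" "zf p = 0" by auto
      then show False using zf[of p] by simp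
    qed
    show "card (zf ` P) < card (UNIV :: 'a set)" using P card_image_le[of P zf] by linarith
  qed
  then obtain y where y0: "\<forall>z\<in>zf ` P. dot N y z \<noteq> 0" by blast
  have y: "\<And>p. p \<in> P \<Longrightarrow> dot N y (zf p) \<noteq> 0" using y0 by simp
  let ?U' = "U \<inter> {x. dot N y x = 0}"
  obtain p0 where p0: "p0 \<in> P" using P by blast
  have dU: "vs.dim U = vs.dim ?U' + 1"
    by (rule dim_drop[OF U(1) UN, of "zf p0"]) (use zf[OF p0] y[OF p0] in auto)
  show ?case
  proof (intro exI[of _ ?U'] conjI ballI)
    show "vs.subspace ?U'" by (rule vs.subspace_inter[OF U(1) ker_subspace])
    show "?U' \<subseteq> Dual" using U(2) by blast
    show "vs.dim ?U' + Suc t = vs.dim Dual" using dU U(3) by simp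
  next
    fix p assume p: "p \<in> P"
    have sZ: "vs.subspace (U \<inter> Zs p)" by (rule vs.subspace_inter[OF U(1) QZ(2)])
    have "vs.dim (U \<inter> Zs p) = vs.dim (U \<inter> Zs p \<inter> {x. dot N y x = 0}) + 1"
      by (rule dim_drop[OF sZ, of N "zf p"]) (use UN zf[OF p] y[OF p] in auto)
    moreover have "U \<inter> Zs p \<inter> {x. dot N y x = 0} = ?U' \<inter> Zs p" by blast
    ultimately show "K \<le> vs.dim (?U' \<inter> Zs p) + Suc t" using U(5)[OF p] by simp
    obtain x where x: "x \<in> U" "x \<in> Qs p" "x (ip p) \<noteq> 0" using U(4)[OF p] by blast
    define c where "c = dot N y x / dot N y (zf p)"
    let ?x' = "x - smul c (zf p)"
    have zU: "zf p \<in> U" "zf p \<in> Zs p" using zf[OF p] by auto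
    have "?x' \<in> U" using x zU U(1) by (simp add: vs.subspace_diff vs.subspace_scale)
    moreover have "?x' \<in> Qs p" using x zU QZ(1,3)[of p] by (meson subsetD vs.subspace_diff vs.subspace_scale)
    moreover have "dot N y ?x' = 0" using y[OF p] by (simp add: dot_diff dot_smul c_def)
    moreover have "?x' (ip p) \<noteq> 0" using x(3) QZ(4)[OF zU(2)] by (simp add: smul_def)
    ultimately show "\<exists>x\<in>?U' \<inter> Qs p. x (ip p) \<noteq> 0" by (intro bexI[of _ ?x']) auto
  qed
qed

context syscode
begin

lemma exists_c0: assumes i: "i \<in> {1..n}" shows "\<exists>c\<in>C. c i = 1"
proof -
  have U: "uv i \<in> vecs n" using i by (rule uv_vecs)
  have A: "\<forall>x\<in>vecs n. \<exists>!c. c \<in> C \<and> (\<forall>j\<in>{1..n}. c j = x j)" using sys by (simp add: systematic_def)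
  obtain c where "c \<in> C" "\<forall>j\<in>{1..n}. c j = uv i j" using bspec[OF A U] by blast
  then show ?thesis using i by (intro bexI[of _ c]) (auto simp: uv_def)
qed

lemma start:
  assumes i: "i \<in> {1..n}" and v: "2 \<le> v"
    and rec: "\<forall>l\<in>{1..v}. recovering_set N C i (Rf l)"
    and noti: "\<forall>l\<in>{1..v}. i \<notin> Rf l"
    and disj: "\<forall>l\<in>{1..v}. \<forall>l'\<in>{1..v}. l \<noteq> l' \<longrightarrow> Rf l \<inter> Rf l' = {}"
  shows "\<exists>x\<in>dual_code N C \<inter> suppset ((\<Union>l\<in>{2..v}. Rf l) \<union> {i}). x i \<noteq> 0"
    and "v - 2 \<le> vs.dim (dual_code N C \<inter> suppset (\<Union>l\<in>{2..v}. Rf l))"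
proof -
  have "\<forall>l\<in>{1..v}. \<exists>lam. \<forall>c\<in>C. c i = (\<Sum>k\<in>Rf l. lam k * c k)"
    using rec by (simp add: recovering_set_def)
  then obtain lam where lam: "\<And>l c. l \<in> {1..v} \<Longrightarrow> c \<in> C \<Longrightarrow> c i = (\<Sum>k\<in>Rf l. lam l k * c k)"
    by metis
  have RN: "\<And>l. l \<in> {1..v} \<Longrightarrow> Rf l \<subseteq> {1..N}" using rec by (simp add: recovering_set_def)
  have fin: "\<And>l. l \<in> {1..v} \<Longrightarrow> finite (Rf l)" using RN finite_subset by blast
  have iN: "i \<in> {1..N}" using i nN by auto
  define w where "w l = uv i - (\<Sum>k\<in>Rf l. smul (lam l k) (uv k))" for l
  have w_apply: "w l m = (if m = i then 1 else if m \<in> Rf l then - lam l m else 0)"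
    if l: "l \<in> {1..v}" for l m
  proof -
    have "(\<Sum>k\<in>Rf l. smul (lam l k) (uv k)) m = (\<Sum>k\<in>Rf l. if k = m then lam l k else 0)"
      by (simp add: sum_fun_apply smul_def uv_def) (rule sum.cong, auto)
    also have "\<dots> = (if m \<in> Rf l then lam l m else 0)" using fin[OF l] by simp
    finally show ?thesis using noti l by (auto simp: w_def uv_def)
  qed
  have w_dual: "w l \<in> dual_code N C" if l: "l \<in> {1..v}" for l
  proof -
    have wv: "w l \<in> vecs N"
      unfolding w_def using iN RN[OF l]
      by (intro vs.subspace_diff[OF vecs_subspace] vs.subspace_sum[OF vecs_subspace]
          vs.subspace_scale[OF vecs_subspace] uv_vecs) auto
    have "dot N (w l) c = 0" if c: "c \<in> C" for c
    proof -
      have "dot N c (w l) = c i - (\<Sum>k\<in>Rf l. lam l k * dot N c (uv k))"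
        unfolding w_def using fin[OF l] dot_uv[OF iN, of c] by (simp add: dot_diff dot_sum dot_smul)
      also have "(\<Sum>k\<in>Rf l. lam l k * dot N c (uv k)) = (\<Sum>k\<in>Rf l. lam l k * c k)"
      proof (rule sum.cong[OF refl])
        fix k assume "k \<in> Rf l"
        then have "k \<in> {1..N}" using RN[OF l] by blast
        then show "lam l k * dot N c (uv k) = lam l k * c k" by (simp add: dot_uv)
      qed
      also have "\<dots> = c i" using lam[OF l c] by simp
      finally show ?thesis by (simp add: dot_comm)
    qed
    then show ?thesis using wv by (simp add: dual_code_dot)
  qed
  obtain c0 where c0: "c0 \<in> C" "c0 i = 1" using exists_c0[OF i] by blast
  have lamnz: "\<exists>k\<in>Rf l. lam l k \<noteq> 0" if l: "l \<in> {1..v}" for l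
  proof (rule ccontr)
    assume "\<not> ?thesis"
    then have "(\<Sum>k\<in>Rf l. lam l k * c0 k) = 0" by simp
    then show False using lam[OF l c0(1)] c0(2) by simp
  qed
  let ?S = "\<Union>l\<in>{2..v}. Rf l"
  have l2: "2 \<in> {1..v}" using v by simp
  show "\<exists>x\<in>dual_code N C \<inter> suppset (?S \<union> {i}). x i \<noteq> 0"
  proof (intro bexI[of _ "w 2"] IntI)
    show "w 2 i \<noteq> 0" using w_apply[OF l2] by simp
    show "w 2 \<in> dual_code N C" using w_dual[OF l2] .
    show "w 2 \<in> suppset (?S \<union> {i})"
      unfolding suppset_def supp_def using w_apply[OF l2] v by (auto split: if_splits)
  qed
  define d where "d l = w l - w 2" for l
  obtain kf where kf: "\<And>l. l \<in> {1..v} \<Longrightarrow> kf l \<in> Rf l \<and> lam l (kf l) \<noteq> 0"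
    using lamnz by metis
  have dk: "d l' (kf l) = (if l' = l then - lam l (kf l) else 0)" if l: "l \<in> {3..v}" and l': "l' \<in> {3..v}" for l l'
  proof -
    have lv: "l \<in> {1..v}" "l' \<in> {1..v}" using l l' by auto
    have k: "kf l \<in> Rf l" "lam l (kf l) \<noteq> 0" using kf[OF lv(1)] by auto
    have "kf l \<noteq> i" using k noti lv by auto
    moreover have "kf l \<notin> Rf 2" using disj lv(1) l2 k l by fastforce
    moreover have "l' \<noteq> l \<Longrightarrow> kf l \<notin> Rf l'" using disj lv k by fastforce
    ultimately show ?thesis using w_apply[OF lv(2), of "kf l"] w_apply[OF l2, of "kf l"] k
      by (auto simp: d_def)
  qed
  have inj: "inj_on d {3..v}"
  proof (rule inj_onI)
    fix a b assume a: "a \<in> {3..v}" and b: "b \<in> {3..v}" and "d a = d b"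
    then have "d a (kf a) = d b (kf a)" by simp
    then show "a = b" using dk[OF a a] dk[OF a b] kf[of a] a by (auto split: if_splits)
  qed
  have Dsub: "d ` {3..v} \<subseteq> dual_code N C \<inter> suppset ?S"
  proof
    fix x assume "x \<in> d ` {3..v}"
    then obtain l where l: "l \<in> {3..v}" "x = d l" by auto
    have lv: "l \<in> {1..v}" using l by auto
    have dl: "d l \<in> dual_code N C" unfolding d_def
      by (rule vs.subspace_diff[OF dual_subspace w_dual[OF lv] w_dual[OF l2]])
    have "supp (d l) \<subseteq> Rf l \<union> Rf 2"
      unfolding supp_def d_def using w_apply[OF lv] w_apply[OF l2] l
      by (auto split: if_splits)
    moreover have "Rf l \<union> Rf 2 \<subseteq> ?S"
    proof -
      have "l \<in> {2..v}" "2 \<in> {2..v}" using l v by auto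
      then show ?thesis by blast
    qed
    ultimately have "d l \<in> suppset ?S" unfolding suppset_def by blast
    with dl show "x \<in> dual_code N C \<inter> suppset ?S" using l by simp
  qed
  have indep: "vs.independent (d ` {3..v})"
  proof (rule vs.independent_if_scalars_zero)
    show "finite (d ` {3..v})" by simp
    fix f x assume s: "(\<Sum>x\<in>d ` {3..v}. smul (f x) x) = 0" and x: "x \<in> d ` {3..v}"
    then obtain l where l: "l \<in> {3..v}" "x = d l" by auto
    have "0 = (\<Sum>x\<in>d ` {3..v}. smul (f x) x) (kf l)" using s by simp
    also have "\<dots> = (\<Sum>l'\<in>{3..v}. f (d l') * d l' (kf l))"
      using sum.reindex[OF inj, of "\<lambda>x. f x * x (kf l)"] by (simp add: sum_fun_apply smul_def)
    also have "\<dots> = (\<Sum>l'\<in>{3..v}. if l' = l then - (f (d l) * lam l (kf l)) else 0)"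
      by (rule sum.cong) (auto simp: dk[OF l(1)])
    also have "\<dots> = - (f x * lam l (kf l))" using l by simp
    finally show "f x = 0" using kf[of l] l by auto
  qed
  have "card (d ` {3..v}) \<le> vs.dim (dual_code N C \<inter> suppset ?S)"
    by (rule dim_indep_le[OF Dsub _ indep, of N]) (auto simp: dual_code_def)
  moreover have "card (d ` {3..v}) = v - 2" using card_image[OF inj] by simp
  ultimately show "v - 2 \<le> vs.dim (dual_code N C \<inter> suppset ?S)" by simp
qed

end

theorem mainTheorem2:
  fixes C :: "(nat \<Rightarrow> 'a::{finite,field}) set"
    and N n u v :: nat
    and R :: "nat set \<Rightarrow> nat \<Rightarrow> nat \<Rightarrow> nat set"
  assumes "ordered_batch_code N n u v C"
    and "0 < u" and "2 \<le> v" and "u * v \<le> n"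
    and "card (UNIV :: 'a set) \<ge> max (4 * u * (n choose u)) 7"
    and "\<forall>I. I \<subseteq> {1..n} \<and> card I = u \<longrightarrow> ob_family N C v I (R I)"
  shows "\<exists>V. is_subspace V \<and> V \<subseteq> dual_code N C \<and>
           int (vdim V) = (int N - int n) - int v + 2 \<and>
           (\<forall>I. I \<subseteq> {1..n} \<and> card I = u \<longrightarrow>
              (\<forall>i\<in>I. \<exists>w\<in>V. i \<in> supp w \<and> supp w \<subseteq> (\<Union>l\<in>{2..v}. R I i l) \<union> {i}))"
proof -
  note obc = assms(1)
  have lin: "linear_code N C" and sys: "systematic N n C" using obc by (auto simp: ordered_batch_code_def)
  interpret sc: syscode N n C by unfold_locales (fact lin, fact sys)
  define SS where "SS = {I. I \<subseteq> {1..n} \<and> card I = u}"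
  define P where "P = Sigma SS (\<lambda>I. I)"
  define Sf where "Sf I i = (\<Union>l\<in>{2..v}. R I i l)" for I i
  define Qs where "Qs = (\<lambda>(I, i). suppset (Sf I i \<union> {i}) :: (nat \<Rightarrow> 'a) set)"
  define Zs where "Zs = (\<lambda>(I, i). suppset (Sf I i - {i}) :: (nat \<Rightarrow> 'a) set)"
  have finSS: "finite SS" unfolding SS_def by (rule finite_subset[of _ "Pow {1..n}"]) auto
  have cardSS: "card SS = n choose u" unfolding SS_def using n_subsets[of "{1..n}" u] by simp
  have cardI: "\<And>I. I \<in> SS \<Longrightarrow> finite I \<and> card I = u" unfolding SS_def using finite_subset by blast
  have finP: "finite P" unfolding P_def using finSS cardI by auto
  have cardP: "card P = u * (n choose u)"
    unfolding P_def using finSS cardI cardSS by (simp add: card_SigmaI)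
  have "u * 1 \<le> u * v" using assms(3) by (intro mult_le_mono2) simp
  then have un: "u \<le> n" using assms(4) by linarith
  have "{1..u} \<in> SS" unfolding SS_def using un by auto
  then have "({1..u}, 1) \<in> P" unfolding P_def using assms(2) by auto
  then have Pne: "P \<noteq> {}" by blast
  have "4 * (u * (n choose u)) \<le> card (UNIV :: 'a set)" "7 \<le> card (UNIV :: 'a set)"
    using assms(5) by (auto simp: mult.assoc)
  then have Pq: "card P < card (UNIV :: 'a set)" using cardP by linarith
  have fam: "ob_family N C v I (R I)" if "I \<in> SS" for I using assms(6) that unfolding SS_def by blast
  have noti: "\<forall>l\<in>{1..v}. i \<notin> R I i l" if p: "(I, i) \<in> P" for I i
  proof (intro ballI notI)
    fix l assume l: "l \<in> {1..v}" and il: "i \<in> R I i l"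
    have IS: "I \<in> SS" "i \<in> I" using p unfolding P_def by auto
    let ?r = "{(a, b). a \<in> I \<and> b \<in> I \<and> b \<in> (\<Union>l\<in>{1..v}. R I a l)}"
    have ac: "acyclic ?r" using fam[OF IS(1)] unfolding ob_family_def by blast
    have "(i, i) \<in> ?r" using IS(2) il l by blast
    then have "(i, i) \<in> ?r\<^sup>+" by blast
    then show False using ac unfolding acyclic_def by blast
  qed
  have start: "(\<exists>x\<in>dual_code N C \<inter> Qs p. x (snd p) \<noteq> 0) \<and> v - 2 \<le> vs.dim (dual_code N C \<inter> Zs p)"
    if p: "p \<in> P" for p
  proof -
    obtain I i where pe: "p = (I, i)" by (cases p)
    have IS: "I \<in> SS" "i \<in> I" using p pe unfolding P_def by auto
    have i: "i \<in> {1..n}" using IS unfolding SS_def by auto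
    have F: "ob_family N C v I (R I)" using fam[OF IS(1)] .
    have rec: "\<forall>l\<in>{1..v}. recovering_set N C i (R I i l)" using F IS(2) unfolding ob_family_def by blast
    have disj: "\<forall>l\<in>{1..v}. \<forall>l'\<in>{1..v}. l \<noteq> l' \<longrightarrow> R I i l \<inter> R I i l' = {}"
      using F IS(2) unfolding ob_family_def by blast
    have nt: "\<forall>l\<in>{1..v}. i \<notin> R I i l" using noti p pe by blast
    have "Sf I i - {i} = Sf I i" using nt assms(3) unfolding Sf_def by auto
    then show ?thesis
      using sc.start[OF i assms(3) rec nt disj] pe unfolding Qs_def Zs_def Sf_def by simp
  qed
  have "\<exists>U. vs.subspace U \<and> U \<subseteq> dual_code N C \<and> vs.dim U + (v - 2) = vs.dim (dual_code N C) \<and>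
     (\<forall>p\<in>P. (\<exists>x\<in>U \<inter> Qs p. x (snd p) \<noteq> 0) \<and> v - 2 \<le> vs.dim (U \<inter> Zs p) + (v - 2))"
  proof (rule iterate[where ip = snd])
    show "vs.subspace (dual_code N C)" by (rule dual_subspace)
    show "dual_code N C \<subseteq> vecs N" by (auto simp: dual_code_def)
    show "finite P" "P \<noteq> {}" "card P < card (UNIV :: 'a set)" by (fact finP, fact Pne, fact Pq)
    show "\<And>p. vs.subspace (Qs p)" unfolding Qs_def by (auto simp: suppset_subspace split: prod.splits)
    show "\<And>p. vs.subspace (Zs p)" unfolding Zs_def by (auto simp: suppset_subspace split: prod.splits)
    show "\<And>p. Zs p \<subseteq> Qs p" unfolding Zs_def Qs_def suppset_def by (auto split: prod.splits)
    show "\<And>p x. x \<in> Zs p \<Longrightarrow> x (snd p) = 0"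
      unfolding Zs_def suppset_def supp_def by (auto split: prod.splits)
    show "\<And>p. p \<in> P \<Longrightarrow> (\<exists>x\<in>dual_code N C \<inter> Qs p. x (snd p) \<noteq> 0) \<and> v - 2 \<le> vs.dim (dual_code N C \<inter> Zs p)"
      by (rule start)
  qed simp
  then obtain U where U: "vs.subspace U" "U \<subseteq> dual_code N C" "vs.dim U + (v - 2) = N - n"
    "\<And>p. p \<in> P \<Longrightarrow> \<exists>x\<in>U \<inter> Qs p. x (snd p) \<noteq> 0"
    using sc.dual_dim by auto
  show ?thesis
  proof (intro exI[of _ U] conjI allI impI ballI)
    show "is_subspace U" using U(1) by (simp add: is_subspace_def)
    show "U \<subseteq> dual_code N C" by (fact U(2))
    show "int (vdim U) = int N - int n - int v + 2"
    proof -
      have "vs.dim U + (v - 2) = N - n" "n \<le> N" "2 \<le> v" using U(3) sc.nN assms(3) by auto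
      then show ?thesis unfolding vdim_def by arith
    qed
  next
    fix I i assume I: "I \<subseteq> {1..n} \<and> card I = u" and i: "i \<in> I"
    then have "(I, i) \<in> P" unfolding P_def SS_def by auto
    then obtain x where x: "x \<in> U" "x \<in> Qs (I, i)" "x i \<noteq> 0" using U(4) by fastforce
    show "\<exists>w\<in>U. i \<in> supp w \<and> supp w \<subseteq> (\<Union>l\<in>{2..v}. R I i l) \<union> {i}"
      using x unfolding Qs_def suppset_def Sf_def supp_def by auto
  qed
qed

end
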